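(* Consider binary classification with $\mathcal Y=\{-1,+1\}$. Let $Y^*(x)=\arg\max_{y}{\mathbb P}(Y=y\mid X=x)$ be the Bayes optimal label and write $Y^*=Y^*(X)$. Suppose ${\mathbb P}(Y^*=+1)={\mathbb P}(Y^*=-1)$, and let $f$ be a convex function with $f(1)=0$ such that $f(v)$ is monotonically increasing in $|v-1|$ on $\mathrm{dom}(f)$. Then maximizing $D_f(P_{h\times Y^*}\,\|\,Q_{h\times Y^*})$ over classifiers $h:\mathcal X\to\{-1,+1\}$ returns the Bayes optimal classifier $h^*=\arg\max_h{\mathbb P}(h(X)=Y)$.
   Context: $(X,Y)$ is a random pair with features $X\in\mathcal X$ and label $Y\in\{-1,+1\}$. A classifier is a measurable map $h:\mathcal X\to\{-1,+1\}$. $P_{h\times Y^*}(y,y')={\mathbb P}(h(X)=y,Y^*=y')$ is the joint distribution of $(h(X),Y^* )$ and $Q_{h\times Y^*}(y,y')={\mathbb P}(h(X)=y)\,{\mathbb P}(Y^*=y')$ the product of its marginals. For distributions $P,Q$ on a finite set with masses $p,q$, $D_f(P\|Q)=\sum_z q(z) f(p(z)/q(z))$. *)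

theory Defs
  imports "HOL-Probability.Probability"
begin

definition labels :: "int set" where "labels = {-1, 1}"

text \<open>f-divergence between two mass functions on a finite set Z
  (with the convention that a term with q z = 0 contributes 0).\<close>
definition fdiv :: "(real \<Rightarrow> real) \<Rightarrow> ('z \<Rightarrow> real) \<Rightarrow> ('z \<Rightarrow> real) \<Rightarrow> 'z set \<Rightarrow> real" where
  "fdiv f p q Z = (\<Sum>z\<in>Z. q z * f (p z / q z))"

text \<open>Joint distribution of (h(X), Y*) and product of its marginals, Y* = ys(X).\<close>
definition joint_mass :: "'a measure \<Rightarrow> ('a \<Rightarrow> 'x) \<Rightarrow> ('x \<Rightarrow> int) \<Rightarrow> ('x \<Rightarrow> int) \<Rightarrow> int \<times> int \<Rightarrow> real" where
  "joint_mass M X h ys = (\<lambda>(y, y'). measure M {\<omega> \<in> space M. h (X \<omega>) = y \<and> ys (X \<omega>) = y'})"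

definition prod_mass :: "'a measure \<Rightarrow> ('a \<Rightarrow> 'x) \<Rightarrow> ('x \<Rightarrow> int) \<Rightarrow> ('x \<Rightarrow> int) \<Rightarrow> int \<times> int \<Rightarrow> real" where
  "prod_mass M X h ys = (\<lambda>(y, y'). measure M {\<omega> \<in> space M. h (X \<omega>) = y} *
                                     measure M {\<omega> \<in> space M. ys (X \<omega>) = y'})"

text \<open>Bayes optimal label from a version eta of P(Y = +1 | X = x):
  argmax_y P(Y = y | X = x), ties broken in favour of +1.\<close>
definition bayes_label :: "('x \<Rightarrow> real) \<Rightarrow> 'x \<Rightarrow> int" where
  "bayes_label eta x = (if eta x \<ge> 1/2 then 1 else -1)"

definition classifier :: "'x measure \<Rightarrow> ('x \<Rightarrow> int) \<Rightarrow> bool" where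
  "classifier N h \<longleftrightarrow> h \<in> N \<rightarrow>\<^sub>M count_space UNIV \<and> (\<forall>x\<in>space N. h x \<in> labels)"

definition accuracy :: "'a measure \<Rightarrow> ('a \<Rightarrow> 'x) \<Rightarrow> ('a \<Rightarrow> int) \<Rightarrow> ('x \<Rightarrow> int) \<Rightarrow> real" where
  "accuracy M X Y h = measure M {\<omega> \<in> space M. h (X \<omega>) = Y \<omega>}"

end

theory Submission
  imports Defs
begin

lemma lim_le:
  assumes "finite_measure M" "incseq A" "incseq B" "range A \<subseteq> sets M" "range B \<subseteq> sets M"
   "\<And>n. measure M (A n) \<le> measure M (B n)"
  shows "measure M (\<Union>n. A n) \<le> measure M (\<Union>n. B n)"
proof -
  interpret finite_measure M by fact
  have a: "(\<lambda>n. measure M (A n)) \<longlonglongrightarrow> measure M (\<Union>n. A n)"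
    using assms by (intro finite_Lim_measure_incseq) auto
  have b: "(\<lambda>n. measure M (B n)) \<longlonglongrightarrow> measure M (\<Union>n. B n)"
    using assms by (intro finite_Lim_measure_incseq) auto
  show ?thesis by (rule LIMSEQ_le[OF a b]) (use assms(6) in auto)
qed

lemma term_bound:
  fixes f :: "real \<Rightarrow> real"
  assumes cf: "convex_on {0..} f" and a: "0 \<le> a1" "0 \<le> a2" and P: "P = a1 + a2"
  shows "P * (1/2) * f (a1 / (P * (1/2))) + P * (1/2) * f (a2 / (P * (1/2))) \<le> P / 2 * (f 0 + f 2)"
proof (cases "P = 0")
  case True thus ?thesis by simp
next
  case False
  then have Pp: "P > 0" using a P by simp
  define t where "t = a1 / P"
  have t: "0 \<le> t" "t \<le> 1" using a P Pp by (auto simp: t_def field_simps)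
  have e1: "a1 / (P * (1/2)) = (1 - t) *\<^sub>R 0 + t *\<^sub>R 2" using Pp by (simp add: t_def field_simps)
  have e2: "a2 / (P * (1/2)) = (1 - (1 - t)) *\<^sub>R 0 + (1 - t) *\<^sub>R 2" using Pp P by (simp add: t_def field_simps)
  have f1: "f (a1 / (P * (1/2))) \<le> (1 - t) * f 0 + t * f 2"
    unfolding e1 by (rule convex_onD[OF cf]) (use t in auto)
  have f2: "f (a2 / (P * (1/2))) \<le> (1 - (1 - t)) * f 0 + (1 - t) * f 2"
    unfolding e2 by (rule convex_onD[OF cf]) (use t in auto)
  have "P * (1/2) * f (a1 / (P * (1/2))) + P * (1/2) * f (a2 / (P * (1/2)))
     \<le> P * (1/2) * ((1 - t) * f 0 + t * f 2) + P * (1/2) * ((1 - (1 - t)) * f 0 + (1 - t) * f 2)"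
    using f1 f2 Pp by (intro add_mono mult_left_mono) auto
  also have "\<dots> = P / 2 * (f 0 + f 2)" by (simp add: algebra_simps)
  finally show ?thesis .
qed

lemma split_meas:
  assumes "finite_measure M" "Z \<in> M \<rightarrow>\<^sub>M count_space UNIV" "\<forall>\<omega>\<in>space M. Z \<omega> \<in> labels" "E \<in> sets M"
  shows "measure M E = measure M {\<omega>\<in>E. Z \<omega> = 1} + measure M {\<omega>\<in>E. Z \<omega> = -1}"
proof -
  interpret finite_measure M by fact
  have s: "\<And>c. {\<omega>\<in>E. Z \<omega> = c} = E \<inter> (Z -` {c} \<inter> space M)"
    using sets.sets_into_space[OF assms(4)] by auto
  have m: "\<And>c. {\<omega>\<in>E. Z \<omega> = c} \<in> sets M" unfolding s
    using assms(2,4) by (intro sets.Int measurable_sets) auto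
  have "E = {\<omega>\<in>E. Z \<omega> = 1} \<union> {\<omega>\<in>E. Z \<omega> = -1}"
    using assms(3) sets.sets_into_space[OF assms(4)] by (auto simp: labels_def)
  then have "measure M E = measure M ({\<omega>\<in>E. Z \<omega> = 1} \<union> {\<omega>\<in>E. Z \<omega> = -1})" by simp
  also have "\<dots> = measure M {\<omega>\<in>E. Z \<omega> = 1} + measure M {\<omega>\<in>E. Z \<omega> = -1}"
    by (rule finite_measure_Union[OF m m]) auto
  finally show ?thesis .
qed

lemma fdiv_formula:
  fixes M :: "'a measure" and X :: "'a \<Rightarrow> 'x" and g k :: "'x \<Rightarrow> int"
  assumes "\<And>y'. measure M {\<omega>\<in>space M. k (X \<omega>) = y'} = (if y' \<in> labels then 1/2 else 0)"
  shows "fdiv f (joint_mass M X g k) (prod_mass M X g k) (labels \<times> labels) =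
    (\<Sum>y\<in>labels. measure M {\<omega>\<in>space M. g (X \<omega>) = y} * (1/2) * f (measure M {\<omega>\<in>space M. g (X \<omega>) = y \<and> k (X \<omega>) = 1} / (measure M {\<omega>\<in>space M. g (X \<omega>) = y} * (1/2)))
      + measure M {\<omega>\<in>space M. g (X \<omega>) = y} * (1/2) * f (measure M {\<omega>\<in>space M. g (X \<omega>) = y \<and> k (X \<omega>) = -1} / (measure M {\<omega>\<in>space M. g (X \<omega>) = y} * (1/2))))"
  unfolding fdiv_def joint_mass_def prod_mass_def
  by (simp add: sum.cartesian_product[symmetric] assms labels_def)

theorem theorem2:
  fixes M :: "'a measure" and N :: "'x measure"
    and X :: "'a \<Rightarrow> 'x" and Y :: "'a \<Rightarrow> int"
    and eta :: "'x \<Rightarrow> real" and f :: "real \<Rightarrow> real"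
  assumes "prob_space M"
    and "X \<in> M \<rightarrow>\<^sub>M N"
    and "Y \<in> M \<rightarrow>\<^sub>M count_space UNIV"
    and "\<forall>\<omega>\<in>space M. Y \<omega> \<in> labels"
    and "eta \<in> borel_measurable N"
    and "\<forall>A\<in>sets N. measure M {\<omega> \<in> space M. X \<omega> \<in> A \<and> Y \<omega> = 1}
            = (LINT \<omega>:(X -` A \<inter> space M)|M. eta (X \<omega>))"
    and "measure M {\<omega> \<in> space M. bayes_label eta (X \<omega>) = 1}
          = measure M {\<omega> \<in> space M. bayes_label eta (X \<omega>) = -1}"
    and "convex_on {0..} f"
    and "f 1 = 0"
    and "\<forall>u\<ge>0. \<forall>v\<ge>0. \<bar>u - 1\<bar> \<le> \<bar>v - 1\<bar> \<longrightarrow> f u \<le> f v"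
  shows "classifier N (bayes_label eta)
    \<and> (\<forall>h. classifier N h \<longrightarrow> accuracy M X Y h \<le> accuracy M X Y (bayes_label eta))
    \<and> (\<forall>h. classifier N h \<longrightarrow>
          fdiv f (joint_mass M X h (bayes_label eta)) (prod_mass M X h (bayes_label eta)) (labels \<times> labels)
          \<le> fdiv f (joint_mass M X (bayes_label eta) (bayes_label eta))
                    (prod_mass M X (bayes_label eta) (bayes_label eta)) (labels \<times> labels))"
proof -
  interpret P: prob_space M by fact
  have fm: "finite_measure M" by (rule P.finite_measure_axioms)
  note [measurable] = assms(2,3,5)
  let ?b = "bayes_label eta"
  have bm[measurable]: "?b \<in> N \<rightarrow>\<^sub>M count_space UNIV" unfolding bayes_label_def by measurable
  have cb: "classifier N ?b" using bm by (auto simp: classifier_def labels_def bayes_label_def)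
  have Xsp: "\<And>\<omega>. \<omega> \<in> space M \<Longrightarrow> X \<omega> \<in> space N" using assms(2) by (rule measurable_space)
  define Q where "Q c S = measure M {\<omega>\<in>space M. X \<omega> \<in> S \<and> Y \<omega> = c}" for c S
  have evs: "{\<omega>\<in>space M. X \<omega> \<in> S \<and> Y \<omega> = c} \<in> sets M" if "S \<in> sets N" for S c
    using that by measurable
  have evX: "{\<omega>\<in>space M. X \<omega> \<in> S} \<in> sets M" if "S \<in> sets N" for S
    using that by measurable
  have PX: "measure M {\<omega>\<in>space M. X \<omega> \<in> S} = Q 1 S + Q (-1) S" if "S \<in> sets N" for S
  proof -
    have "measure M {\<omega>\<in>space M. X \<omega> \<in> S} = measure M {\<omega>\<in>{\<omega>\<in>space M. X \<omega> \<in> S}. Y \<omega> = 1}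
       + measure M {\<omega>\<in>{\<omega>\<in>space M. X \<omega> \<in> S}. Y \<omega> = -1}"
      by (rule split_meas[OF fm assms(3) assms(4) evX[OF that]])
    moreover have "\<And>c. {\<omega>\<in>{\<omega>\<in>space M. X \<omega> \<in> S}. Y \<omega> = c} = {\<omega>\<in>space M. X \<omega> \<in> S \<and> Y \<omega> = c}"
      by auto
    ultimately show ?thesis by (simp add: Q_def)
  qed
  have qadd: "Q c (S \<union> T) = Q c S + Q c T" if "S \<in> sets N" "T \<in> sets N" "S \<inter> T = {}" for c S T
  proof -
    have "{\<omega>\<in>space M. X \<omega> \<in> S \<union> T \<and> Y \<omega> = c} = {\<omega>\<in>space M. X \<omega> \<in> S \<and> Y \<omega> = c} \<union> {\<omega>\<in>space M. X \<omega> \<in> T \<and> Y \<omega> = c}"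
      by auto
    then show ?thesis unfolding Q_def
      using P.finite_measure_Union[OF evs[OF that(1)] evs[OF that(2)]] that(3) by auto
  qed
  have qsplit: "Q c S = Q c (S \<inter> T) + Q c (S - T)" if "S \<in> sets N" "T \<in> sets N" for c S T
  proof -
    have "S = (S \<inter> T) \<union> (S - T)" by auto
    then have "Q c S = Q c ((S \<inter> T) \<union> (S - T))" by simp
    also have "\<dots> = Q c (S \<inter> T) + Q c (S - T)" using that by (intro qadd) auto
    finally show ?thesis .
  qed
  have L: "Q (-1) C \<le> Q 1 C" if C: "C \<in> sets N" "C \<subseteq> {x. 1/2 \<le> eta x}" for C
  proof -
    define Cn where "Cn n = C \<inter> {x\<in>space N. eta x \<le> real n}" for n :: nat
    have Cn[measurable]: "Cn n \<in> sets N" for n unfolding Cn_def using C by measurable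
    have step: "Q (-1) (Cn n) \<le> Q 1 (Cn n)" for n
    proof -
      define S where "S = X -` Cn n \<inter> space M"
      have S: "S \<in> sets M" unfolding S_def by measurable
      have S': "S = {\<omega>\<in>space M. X \<omega> \<in> Cn n}" by (auto simp: S_def)
      have q1: "Q 1 (Cn n) = (LINT \<omega>:S|M. eta (X \<omega>))"
        using assms(6) Cn by (simp add: Q_def S_def)
      have b: "\<omega> \<in> S \<Longrightarrow> 1/2 \<le> eta (X \<omega>) \<and> eta (X \<omega>) \<le> real n" for \<omega>
        using C(2) by (auto simp: S_def Cn_def)
      have i1: "set_integrable M S (\<lambda>\<omega>. eta (X \<omega>))"
        unfolding set_integrable_def
      proof (rule P.integrable_const_bound[where B="real n"])
        show "AE x in M. norm (indicator S x *\<^sub>R eta (X x)) \<le> real n"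
          by (rule AE_I2) (use b in \<open>fastforce simp: indicator_def\<close>)
        show "(\<lambda>x. indicator S x *\<^sub>R eta (X x)) \<in> borel_measurable M" using S by measurable
      qed
      have i2: "set_integrable M S (\<lambda>\<omega>. 1/2::real)"
        unfolding set_integrable_def
      proof (rule P.integrable_const_bound[where B="1"])
        show "AE x in M. norm (indicator S x *\<^sub>R (1/2::real)) \<le> 1"
          by (auto simp: indicator_def)
        show "(\<lambda>x. indicator S x *\<^sub>R (1/2::real)) \<in> borel_measurable M" using S by measurable
      qed
      have "(LINT \<omega>:S|M. (1/2::real)) \<le> (LINT \<omega>:S|M. eta (X \<omega>))"
        using i2 i1 b by (intro set_integral_mono) auto
      moreover have "(LINT \<omega>:S|M. (1/2::real)) = measure M S * (1/2)"
        using S by (simp add: set_integral_const)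
      moreover have "measure M S = Q 1 (Cn n) + Q (-1) (Cn n)" using PX[OF Cn] S' by simp
      ultimately show ?thesis using q1 by linarith
    qed
    define A where "A n = {\<omega>\<in>space M. X \<omega> \<in> Cn n \<and> Y \<omega> = -1}" for n
    define B where "B n = {\<omega>\<in>space M. X \<omega> \<in> Cn n \<and> Y \<omega> = 1}" for n
    have mono: "Cn m \<subseteq> Cn n" if "m \<le> n" for m n using that by (auto simp: Cn_def)
    have un: "(\<Union>n. Cn n) = C"
      using sets.sets_into_space[OF C(1)] by (auto simp: Cn_def intro: real_nat_ceiling_ge)
    have "measure M (\<Union>n. A n) \<le> measure M (\<Union>n. B n)"
    proof (rule lim_le[OF fm])
      show "incseq A" "incseq B" using mono by (auto simp: incseq_def A_def B_def)
      show "range A \<subseteq> sets M" "range B \<subseteq> sets M" using evs[OF Cn] by (auto simp: A_def B_def)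
      show "measure M (A n) \<le> measure M (B n)" for n using step[of n] by (simp add: A_def B_def Q_def)
    qed
    moreover have "(\<Union>n. A n) = {\<omega>\<in>space M. X \<omega> \<in> C \<and> Y \<omega> = -1}"
      using un by (auto simp: A_def)
    moreover have "(\<Union>n. B n) = {\<omega>\<in>space M. X \<omega> \<in> C \<and> Y \<omega> = 1}"
      using un by (auto simp: B_def)
    ultimately show ?thesis by (simp add: Q_def)
  qed
  have L2: "Q 1 C \<le> Q (-1) C" if C: "C \<in> sets N" "C \<subseteq> {x. eta x < 1/2}" for C
  proof -
    define Cn where "Cn n = C \<inter> {x\<in>space N. - real n \<le> eta x}" for n :: nat
    have Cn[measurable]: "Cn n \<in> sets N" for n unfolding Cn_def using C by measurable
    have step: "Q 1 (Cn n) \<le> Q (-1) (Cn n)" for n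
    proof -
      define S where "S = X -` Cn n \<inter> space M"
      have S: "S \<in> sets M" unfolding S_def by measurable
      have S': "S = {\<omega>\<in>space M. X \<omega> \<in> Cn n}" by (auto simp: S_def)
      have q1: "Q 1 (Cn n) = (LINT \<omega>:S|M. eta (X \<omega>))"
        using assms(6) Cn by (simp add: Q_def S_def)
      have b: "\<omega> \<in> S \<Longrightarrow> eta (X \<omega>) < 1/2 \<and> - real n \<le> eta (X \<omega>)" for \<omega>
        using C(2) by (auto simp: S_def Cn_def)
      have i1: "set_integrable M S (\<lambda>\<omega>. eta (X \<omega>))"
        unfolding set_integrable_def
      proof (rule P.integrable_const_bound[where B="real n + 1"])
        show "AE x in M. norm (indicator S x *\<^sub>R eta (X x)) \<le> real n + 1"
          by (rule AE_I2) (use b in \<open>fastforce simp: indicator_def\<close>)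
        show "(\<lambda>x. indicator S x *\<^sub>R eta (X x)) \<in> borel_measurable M" using S by measurable
      qed
      have i2: "set_integrable M S (\<lambda>\<omega>. 1/2::real)"
        unfolding set_integrable_def
      proof (rule P.integrable_const_bound[where B="1"])
        show "AE x in M. norm (indicator S x *\<^sub>R (1/2::real)) \<le> 1"
          by (auto simp: indicator_def)
        show "(\<lambda>x. indicator S x *\<^sub>R (1/2::real)) \<in> borel_measurable M" using S by measurable
      qed
      have "(LINT \<omega>:S|M. eta (X \<omega>)) \<le> (LINT \<omega>:S|M. (1/2::real))"
        using i1 i2 b by (intro set_integral_mono) (auto simp: less_imp_le)
      moreover have "(LINT \<omega>:S|M. (1/2::real)) = measure M S * (1/2)"
        using S by (simp add: set_integral_const)
      moreover have "measure M S = Q 1 (Cn n) + Q (-1) (Cn n)" using PX[OF Cn] S' by simp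
      ultimately show ?thesis using q1 by linarith
    qed
    define A where "A n = {\<omega>\<in>space M. X \<omega> \<in> Cn n \<and> Y \<omega> = -1}" for n
    define B where "B n = {\<omega>\<in>space M. X \<omega> \<in> Cn n \<and> Y \<omega> = 1}" for n
    have mono: "Cn m \<subseteq> Cn n" if "m \<le> n" for m n using that by (auto simp: Cn_def)
    have un: "(\<Union>n. Cn n) = C"
      proof -
      have "\<exists>n. - real n \<le> eta x" for x
        using real_nat_ceiling_ge[of "- eta x"] by (intro exI[of _ "nat \<lceil>- eta x\<rceil>"]) linarith
      then show ?thesis using sets.sets_into_space[OF C(1)] by (auto simp: Cn_def)
    qed
    have "measure M (\<Union>n. B n) \<le> measure M (\<Union>n. A n)"
    proof (rule lim_le[OF fm])
      show "incseq A" "incseq B" using mono by (auto simp: incseq_def A_def B_def)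
      show "range A \<subseteq> sets M" "range B \<subseteq> sets M" using evs[OF Cn] by (auto simp: A_def B_def)
      show "measure M (B n) \<le> measure M (A n)" for n using step[of n] by (simp add: A_def B_def Q_def)
    qed
    moreover have "(\<Union>n. A n) = {\<omega>\<in>space M. X \<omega> \<in> C \<and> Y \<omega> = -1}"
      using un by (auto simp: A_def)
    moreover have "(\<Union>n. B n) = {\<omega>\<in>space M. X \<omega> \<in> C \<and> Y \<omega> = 1}"
      using un by (auto simp: B_def)
    ultimately show ?thesis by (simp add: Q_def)
  qed
  have Bs: "{x\<in>space N. 1/2 \<le> eta x} \<in> sets N" by measurable
  have acc: "accuracy M X Y g = Q 1 G + Q (-1) (space N - G)"
    if cg: "classifier N g" and Gd: "G = {x\<in>space N. g x = 1}" for g G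
  proof -
    have gm: "g \<in> N \<rightarrow>\<^sub>M count_space UNIV" and gl: "\<forall>x\<in>space N. g x \<in> labels"
      using cg by (auto simp: classifier_def)
    have "G = g -` {1} \<inter> space N" using Gd by auto
    then have G: "G \<in> sets N" using gm by (simp add: measurable_sets)
    have G2: "space N - G \<in> sets N" using G by auto
    have eq: "{\<omega>\<in>space M. g (X \<omega>) = Y \<omega>} = {\<omega>\<in>space M. X \<omega> \<in> G \<and> Y \<omega> = 1} \<union> {\<omega>\<in>space M. X \<omega> \<in> space N - G \<and> Y \<omega> = -1}"
    proof -
      have "g (X \<omega>) = Y \<omega> \<longleftrightarrow> (X \<omega> \<in> G \<and> Y \<omega> = 1) \<or> (X \<omega> \<in> space N - G \<and> Y \<omega> = -1)"
        if "\<omega> \<in> space M" for \<omega>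
        using Xsp[OF that] gl assms(4) that Gd by (auto simp: labels_def)
      then show ?thesis by auto
    qed
    show ?thesis unfolding accuracy_def eq Q_def
      by (rule P.finite_measure_Union[OF evs[OF G] evs[OF G2]]) auto
  qed
  define B where "B = {x\<in>space N. 1/2 \<le> eta x}"
  have accb: "accuracy M X Y ?b = Q 1 B + Q (-1) (space N - B)"
  proof -
    have "{x\<in>space N. ?b x = 1} = B" by (auto simp: B_def bayes_label_def)
    then show ?thesis using acc[OF cb] by simp
  qed
  have part2: "accuracy M X Y h \<le> accuracy M X Y ?b" if ch: "classifier N h" for h
  proof -
    define G where "G = {x\<in>space N. h x = 1}"
    have G: "G \<in> sets N"
    proof -
      have "G = h -` {1} \<inter> space N" by (auto simp: G_def)
      then show ?thesis using ch measurable_sets[of h N "count_space UNIV" "{1}"] by (simp add: classifier_def)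
    qed
    have Bs': "B \<in> sets N" using Bs by (simp add: B_def)
    have accg: "accuracy M X Y h = Q 1 G + Q (-1) (space N - G)" using acc[OF ch] G_def by simp
    have s1: "Q 1 G = Q 1 (G \<inter> B) + Q 1 (G - B)" using qsplit G Bs' by blast
    have s2: "Q (-1) (space N - G) = Q (-1) ((space N - G) \<inter> B) + Q (-1) ((space N - G) - B)"
      using qsplit G Bs' by blast
    have s3: "Q 1 B = Q 1 (B \<inter> G) + Q 1 (B - G)" using qsplit G Bs' by blast
    have s4: "Q (-1) (space N - B) = Q (-1) ((space N - B) \<inter> G) + Q (-1) ((space N - B) - G)"
      using qsplit G Bs' by blast
    have e1: "(space N - G) \<inter> B = B - G" "(space N - B) \<inter> G = G - B" "(space N - G) - B = (space N - B) - G"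
      "B \<inter> G = G \<inter> B"
      using sets.sets_into_space[OF G] sets.sets_into_space[OF Bs'] by auto
    have l1: "Q (-1) (B - G) \<le> Q 1 (B - G)" using L[of "B - G"] G Bs' by (auto simp: B_def)
    have l2: "Q 1 (G - B) \<le> Q (-1) (G - B)"
      using L2[of "G - B"] G Bs' sets.sets_into_space[OF G] by (force simp: B_def)
    show ?thesis using accg accb s1 s2 s3 s4 e1 l1 l2 by simp
  qed
  have bXm: "(\<lambda>\<omega>. ?b (X \<omega>)) \<in> M \<rightarrow>\<^sub>M count_space UNIV" by measurable
  have bXl: "\<forall>\<omega>\<in>space M. ?b (X \<omega>) \<in> labels" by (auto simp: labels_def bayes_label_def)
  have tot: "measure M {\<omega>\<in>space M. ?b (X \<omega>) = 1} + measure M {\<omega>\<in>space M. ?b (X \<omega>) = -1} = 1"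
    using split_meas[OF fm bXm bXl sets.top] P.prob_space by simp
  have Pb: "measure M {\<omega>\<in>space M. ?b (X \<omega>) = y'} = (if y' \<in> labels then 1/2 else 0)" for y'
  proof (cases "y' \<in> labels")
    case True then show ?thesis using tot assms(7) by (auto simp: labels_def)
  next
    case False then have e: "{\<omega>\<in>space M. ?b (X \<omega>) = y'} = {}" using bXl by auto
    show ?thesis unfolding e using False by simp
  qed
  have Db: "fdiv f (joint_mass M X ?b ?b) (prod_mass M X ?b ?b) (labels \<times> labels) = (f 0 + f 2) / 2"
  proof -
    have p1: "measure M {\<omega>\<in>space M. ?b (X \<omega>) = 1} = 1/2" using Pb[of 1] by (simp add: labels_def)
    have p2: "measure M {\<omega>\<in>space M. ?b (X \<omega>) = -1} = 1/2" using Pb[of "-1"] by (simp add: labels_def)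
    have e1: "{\<omega>\<in>space M. ?b (X \<omega>) = -1 \<and> ?b (X \<omega>) = 1} = {}"
         "{\<omega>\<in>space M. ?b (X \<omega>) = 1 \<and> ?b (X \<omega>) = -1} = {}" by auto
    show ?thesis unfolding fdiv_formula[where M=M and X=X and k="?b" and g="?b", OF Pb]
      by (simp add: labels_def p1 p2 e1)
  qed
  have part3: "fdiv f (joint_mass M X h ?b) (prod_mass M X h ?b) (labels \<times> labels) \<le> (f 0 + f 2) / 2"
    if ch: "classifier N h" for h
  proof -
    have hXm: "(\<lambda>\<omega>. h (X \<omega>)) \<in> M \<rightarrow>\<^sub>M count_space UNIV"
      using ch by (auto simp: classifier_def intro: measurable_comp[OF assms(2)])
    have hXl: "\<forall>\<omega>\<in>space M. h (X \<omega>) \<in> labels" using ch Xsp by (auto simp: classifier_def)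
    have htot: "measure M {\<omega>\<in>space M. h (X \<omega>) = 1} + measure M {\<omega>\<in>space M. h (X \<omega>) = -1} = 1"
      using split_meas[OF fm hXm hXl sets.top] P.prob_space by simp
    have ev: "{\<omega>\<in>space M. h (X \<omega>) = y} \<in> sets M" for y
    proof -
      have "{\<omega>\<in>space M. h (X \<omega>) = y} = (\<lambda>\<omega>. h (X \<omega>)) -` {y} \<inter> space M" by auto
      then show ?thesis using hXm by (simp add: measurable_sets)
    qed
    have Ph: "measure M {\<omega>\<in>space M. h (X \<omega>) = y} = measure M {\<omega>\<in>space M. h (X \<omega>) = y \<and> ?b (X \<omega>) = 1}
       + measure M {\<omega>\<in>space M. h (X \<omega>) = y \<and> ?b (X \<omega>) = -1}" for y
    proof -
      have "\<And>c. {\<omega>\<in>{\<omega>\<in>space M. h (X \<omega>) = y}. ?b (X \<omega>) = c} = {\<omega>\<in>space M. h (X \<omega>) = y \<and> ?b (X \<omega>) = c}"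
        by auto
      then show ?thesis using split_meas[OF fm bXm bXl ev[of y]] by simp
    qed
    have tb: "measure M {\<omega>\<in>space M. h (X \<omega>) = y} * (1/2) * f (measure M {\<omega>\<in>space M. h (X \<omega>) = y \<and> ?b (X \<omega>) = 1} / (measure M {\<omega>\<in>space M. h (X \<omega>) = y} * (1/2)))
      + measure M {\<omega>\<in>space M. h (X \<omega>) = y} * (1/2) * f (measure M {\<omega>\<in>space M. h (X \<omega>) = y \<and> ?b (X \<omega>) = -1} / (measure M {\<omega>\<in>space M. h (X \<omega>) = y} * (1/2)))
      \<le> measure M {\<omega>\<in>space M. h (X \<omega>) = y} / 2 * (f 0 + f 2)" for y
      by (rule term_bound[OF assms(8) measure_nonneg measure_nonneg Ph])
    have "fdiv f (joint_mass M X h ?b) (prod_mass M X h ?b) (labels \<times> labels)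
       \<le> measure M {\<omega>\<in>space M. h (X \<omega>) = -1} / 2 * (f 0 + f 2) + measure M {\<omega>\<in>space M. h (X \<omega>) = 1} / 2 * (f 0 + f 2)"
      unfolding fdiv_formula[where M=M and X=X and k="?b" and g=h, OF Pb] using tb[of 1] tb[of "-1"] by (simp add: labels_def)
    also have "\<dots> = (measure M {\<omega>\<in>space M. h (X \<omega>) = 1} + measure M {\<omega>\<in>space M. h (X \<omega>) = -1}) / 2 * (f 0 + f 2)"
      by (simp add: field_simps)
    also have "\<dots> = (f 0 + f 2) / 2" unfolding htot by simp
    finally show ?thesis .
  qed
  show ?thesis using cb part2 part3 unfolding Db by blast
qed

end
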